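(* Let $n\ge2$, let $P$ be a partial $n$-Metric on a set $X$, let $x_o\in X$ and let $f:X\to X$. Suppose there are real numbers $r$ and $0<c<1$ such that for every natural number $i$, $$r\le P(\langle f^{i+1}(x_o)\rangle^n)\quad\text{and}\quad P(\langle f^i(x_o)\rangle^{n-1},f^{i+1}(x_o))\le r+c^i\,\big|P(\langle x_o\rangle^{n-1},f(x_o))\big|$$ (i.e. $f$ is an orbital $c_r$-contraction at $x_o$). Then the orbit $\{f^i(x_o)\}_{i\in\mathbb{N}}$ is a Cauchy sequence (i.e. $f$ is a Cauchy function at $x_o$).
   Context: Notation: $\langle a\rangle^k$ denotes the $k$-tuple $(a,\dots,a)$ inserted into an argument list; $f^0(x_o)=x_o$, $f^{i+1}(x_o)=f(f^i(x_o))$. A partial $n$-Metric on $X$ is a function $P:X^n\to\mathbb{R}$ such that for all $x_1,\dots,x_n,a\in X$: (1) $P(\langle x_1\rangle^n)\le P(\langle x_1\rangle^{n-1},x_2)$; (2) $P$ is invariant under permutations of its arguments; (3) $P(\langle x_1\rangle^{n-1},x_2)=P(\langle x_1\rangle^n)$ and $P(\langle x_2\rangle^{n-1},x_1)=P(\langle x_2\rangle^n)$ iff $x_1=x_2$; (4) $P(x_1,\dots,x_n)\le P(x_1,\dots,x_{n-1},a)+P(\langle a\rangle^{n-1},x_n)-P(\langle a\rangle^n)$. A sequence $\{x_i\}$ is Cauchy if there is $r'\in\mathbb{R}$ (its central distance) such that for every $\epsilon>0$ there is $N$ with $|P(x_{i_1},\dots,x_{i_n})-r'|<\epsilon$ for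 all $i_1,\dots,i_n>N$. *)

theory Defs
  imports Complex_Main "HOL-Library.Multiset"
begin

text \<open>A point of X^n is represented as a list of length n with entries in X.
  The tuple (<x>^(n-1), y) is replicate (n-1) x @ [y]; <x>^n is replicate n x.\<close>

definition partial_n_metric :: "nat \<Rightarrow> 'a set \<Rightarrow> ('a list \<Rightarrow> real) \<Rightarrow> bool" where
  "partial_n_metric n X P \<longleftrightarrow>
     (\<forall>x1\<in>X. \<forall>x2\<in>X.
        P (replicate n x1) \<le> P (replicate (n - 1) x1 @ [x2])) \<and>
     (\<forall>xs ys. length xs = n \<and> set xs \<subseteq> X \<and> mset ys = mset xs \<longrightarrow> P xs = P ys) \<and>
     (\<forall>x1\<in>X. \<forall>x2\<in>X.
        (P (replicate (n - 1) x1 @ [x2]) = P (replicate n x1) \<and>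
         P (replicate (n - 1) x2 @ [x1]) = P (replicate n x2)) \<longleftrightarrow> x1 = x2) \<and>
     (\<forall>xs a. length xs = n \<and> set xs \<subseteq> X \<and> a \<in> X \<longrightarrow>
        P xs \<le> P (butlast xs @ [a]) + P (replicate (n - 1) a @ [last xs]) - P (replicate n a))"

definition pn_cauchy :: "nat \<Rightarrow> ('a list \<Rightarrow> real) \<Rightarrow> (nat \<Rightarrow> 'a) \<Rightarrow> bool" where
  "pn_cauchy n P s \<longleftrightarrow>
     (\<exists>r'::real. \<forall>\<epsilon>>0. \<exists>N::nat. \<forall>is::nat list.
        length is = n \<and> (\<forall>i\<in>set is. i > N) \<longrightarrow> \<bar>P (map s is) - r'\<bar> < \<epsilon>)"

end

theory Submission
  imports Defs
begin

lemma pm_perm: "partial_n_metric n X P \<Longrightarrow> length xs = n \<Longrightarrow> set xs \<subseteq> X \<Longrightarrow> mset ys = mset xs \<Longrightarrow> P xs = P ys"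
  unfolding partial_n_metric_def by blast

lemma pm_tri: "partial_n_metric n X P \<Longrightarrow> length xs = n \<Longrightarrow> set xs \<subseteq> X \<Longrightarrow> a \<in> X \<Longrightarrow>
   P xs \<le> P (butlast xs @ [a]) + P (replicate (n - 1) a @ [last xs]) - P (replicate n a)"
  unfolding partial_n_metric_def by blast

lemma pm_refl: "partial_n_metric n X P \<Longrightarrow> x1 \<in> X \<Longrightarrow> x2 \<in> X \<Longrightarrow>
   P (replicate n x1) \<le> P (replicate (n - 1) x1 @ [x2])"
  unfolding partial_n_metric_def by blast

lemma pm_step:
  assumes pm: "partial_n_metric n X P" and i: "i < length xs" and l: "length xs = n"
    and s: "set xs \<subseteq> X" and a: "a \<in> X"
  shows "P xs \<le> P (xs[i:=a]) + (P (replicate (n-1) a @ [xs!i]) - P (replicate n a))"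
proof -
  define ys where "ys = take i xs @ drop (Suc i) xs @ [xs!i]"
  have xe: "xs = take i xs @ xs!i # drop (Suc i) xs" using id_take_nth_drop[OF i] .
  have m: "mset ys = mset xs" unfolding ys_def by (subst (2) xe) simp
  have sy: "set ys = set xs" using m by (metis set_mset_mset)
  have ly: "length ys = n" using m l by (metis size_mset)
  have e1: "P xs = P ys" using pm_perm[OF pm l s m] .
  have bl: "butlast ys = take i xs @ drop (Suc i) xs" "last ys = xs!i" unfolding ys_def by (simp_all add: butlast_append)
  have t: "P ys \<le> P (butlast ys @ [a]) + P (replicate (n - 1) a @ [last ys]) - P (replicate n a)"
    using pm_tri[OF pm ly] sy s a by auto
  have u: "xs[i:=a] = take i xs @ a # drop (Suc i) xs" using upd_conv_take_nth_drop[OF i] .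
  have m2: "mset (butlast ys @ [a]) = mset (xs[i:=a])" unfolding bl u by simp
  have e2: "P (xs[i:=a]) = P (butlast ys @ [a])"
    using pm_perm[OF pm _ set_update_subsetI[OF s a] m2] l by simp
  show ?thesis using e1 e2 t bl by simp
qed

definition rp :: "nat \<Rightarrow> 'a \<Rightarrow> 'a list \<Rightarrow> 'a list" where
  "rp k a xs = map (\<lambda>i. if i < k then a else xs!i) [0..<length xs]"

lemma rp_0: "rp 0 a xs = xs" unfolding rp_def by (simp add: map_nth)
lemma rp_full: "rp (length xs) a xs = replicate (length xs) a"
proof -
  have "map (\<lambda>i. if i < length xs then a else xs!i) [0..<length xs] = map (\<lambda>i. a) [0..<length xs]"
    by (rule map_cong) auto
  then show ?thesis unfolding rp_def by (simp add: map_replicate_const)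
qed
lemma rp_len[simp]: "length (rp k a xs) = length xs" unfolding rp_def by simp
lemma rp_upd: "k < length xs \<Longrightarrow> (rp k a xs)[k := a] = rp (Suc k) a xs"
  unfolding rp_def by (rule nth_equalityI) (auto simp: nth_list_update)
lemma rp_nth: "k < length xs \<Longrightarrow> rp k a xs ! k = xs ! k" unfolding rp_def by simp
lemma rp_set: "set xs \<subseteq> X \<Longrightarrow> a \<in> X \<Longrightarrow> set (rp k a xs) \<subseteq> X"
  using nth_mem by (fastforce simp: rp_def)

lemma pm_bounds:
  assumes pm: "partial_n_metric n X P" and l: "length xs = n"
    and s: "set xs \<subseteq> X" and a: "a \<in> X"
  shows "k \<le> n \<Longrightarrow> P xs \<le> P (rp k a xs) + (\<Sum>i<k. P (replicate (n-1) a @ [xs!i]) - P (replicate n a))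
     \<and> P (rp k a xs) - (\<Sum>i<k. P (replicate (n-1) (xs!i) @ [a]) - P (replicate n (xs!i))) \<le> P xs"
proof (induction k)
  case 0 then show ?case by (simp add: rp_0)
next
  case (Suc k)
  have k: "k < length xs" using Suc l by simp
  have s1: "P (rp k a xs) \<le> P (rp (Suc k) a xs) + (P (replicate (n-1) a @ [xs!k]) - P (replicate n a))"
    using pm_step[OF pm, of k "rp k a xs" a] k l rp_set[OF s a] a by (simp add: rp_upd rp_nth)
  have xk: "xs!k \<in> X" using s k by auto
  have s2: "P (rp (Suc k) a xs) \<le> P (rp k a xs) + (P (replicate (n-1) (xs!k) @ [a]) - P (replicate n (xs!k)))"
  proof -
    have "(rp (Suc k) a xs)[k := xs!k] = rp k a xs"
      unfolding rp_def by (rule nth_equalityI) (auto simp: nth_list_update)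
    moreover have "rp (Suc k) a xs ! k = a" unfolding rp_def using k by simp
    ultimately show ?thesis
      using pm_step[OF pm, of k "rp (Suc k) a xs" "xs!k"] k l rp_set[OF s a] xk by simp
  qed
  show ?case using Suc s1 s2 by simp
qed

lemma pm_abs:
  fixes B :: real
  assumes pm: "partial_n_metric n X P" and l: "length xs = n"
    and s: "set xs \<subseteq> X" and a: "a \<in> X"
    and B1: "\<And>t. t \<in> set xs \<Longrightarrow> P (replicate (n-1) a @ [t]) - P (replicate n a) \<le> B"
    and B2: "\<And>t. t \<in> set xs \<Longrightarrow> P (replicate (n-1) t @ [a]) - P (replicate n t) \<le> B"
  shows "\<bar>P xs - P (replicate n a)\<bar> \<le> real n * B"
proof -
  have b: "P xs \<le> P (rp n a xs) + (\<Sum>i<n. P (replicate (n-1) a @ [xs!i]) - P (replicate n a))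
     \<and> P (rp n a xs) - (\<Sum>i<n. P (replicate (n-1) (xs!i) @ [a]) - P (replicate n (xs!i))) \<le> P xs"
    using pm_bounds[OF pm l s a, of n] by simp
  have r: "rp n a xs = replicate n a" using rp_full[of xs a] l by simp
  have c1: "(\<Sum>i<n. P (replicate (n-1) a @ [xs!i]) - P (replicate n a)) \<le> (\<Sum>i<n. B)"
    by (rule sum_mono) (use B1 l in auto)
  have c2: "(\<Sum>i<n. P (replicate (n-1) (xs!i) @ [a]) - P (replicate n (xs!i))) \<le> (\<Sum>i<n. B)"
    by (rule sum_mono) (use B2 l in auto)
  show ?thesis using b r c1 c2 by (simp add: abs_le_iff)
qed


lemma pm_upper:
  fixes B :: real
  assumes pm: "partial_n_metric n X P" and l: "length xs = n"
    and s: "set xs \<subseteq> X" and a: "a \<in> X"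
    and B1: "\<And>t. t \<in> set xs \<Longrightarrow> P (replicate (n-1) a @ [t]) - P (replicate n a) \<le> B"
  shows "P xs \<le> P (replicate n a) + real n * B"
proof -
  have b: "P xs \<le> P (rp n a xs) + (\<Sum>i<n. P (replicate (n-1) a @ [xs!i]) - P (replicate n a))"
    using pm_bounds[OF pm l s a, of n] by simp
  have r: "rp n a xs = replicate n a" using rp_full[of xs a] l by simp
  have c1: "(\<Sum>i<n. P (replicate (n-1) a @ [xs!i]) - P (replicate n a)) \<le> (\<Sum>i<n. B)"
    by (rule sum_mono) (use B1 l in auto)
  show ?thesis using b r c1 by simp
qed

theorem lemma5p11:
  fixes n :: nat and X :: "'a set" and P :: "'a list \<Rightarrow> real"
    and f :: "'a \<Rightarrow> 'a" and xo :: 'a and r c :: real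
  assumes "n \<ge> 2"
    and "partial_n_metric n X P"
    and "xo \<in> X"
    and "\<forall>x\<in>X. f x \<in> X"
    and "0 < c" and "c < 1"
    and "\<forall>i::nat. r \<le> P (replicate n ((f ^^ (i + 1)) xo))"
    and "\<forall>i::nat. P (replicate (n - 1) ((f ^^ i) xo) @ [(f ^^ (i + 1)) xo])
                  \<le> r + c ^ i * \<bar>P (replicate (n - 1) xo @ [f xo])\<bar>"
  shows "pn_cauchy n P (\<lambda>i. (f ^^ i) xo)"
proof -
  note pm = assms(2)
  have n1: "n \<ge> 1" using assms(1) by simp
  define x where "x = (\<lambda>i. (f ^^ i) xo)"
  define K where "K = \<bar>P (replicate (n - 1) xo @ [f xo])\<bar>"
  define a where "a = (\<lambda>i. P (replicate n (x i)))"
  define E where "E = (\<lambda>j k. P (replicate (n - 1) (x j) @ [x k]))"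
  have K0: "K \<ge> 0" unfolding K_def by simp
  have c1: "1 - c > 0" using assms(6) by simp
  have xX: "x i \<in> X" for i
    unfolding x_def by (induction i) (use assms(3,4) in auto)
  have ar: "r \<le> a (i+1)" for i using assms(7) unfolding a_def x_def by simp
  have Eb: "E i (i+1) \<le> r + c^i * K" for i using assms(8) unfolding E_def x_def K_def by simp
  have aE: "a j \<le> E j k" for j k unfolding a_def E_def using pm_refl[OF pm xX xX] .
  have rep: "replicate (n - 1) y @ [y] = replicate n y" for y :: 'a
    using n1 by (metis Suc_pred' less_le_trans zero_less_one replicate_Suc replicate_append_same)
  have EE: "E j j = a j" for j unfolding E_def a_def using rep by simp
  have A: "E j (j + Suc d) \<le> r + c^j*K/(1-c)" for j d
  proof (induction d arbitrary: j)
    case 0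
    have "c^j * K \<le> c^j*K/(1-c)"
      using K0 c1 assms(5,6) by (simp add: field_simps mult_left_le)
    then show ?case using Eb[of j] by simp
  next
    case (Suc d)
    let ?k = "j + Suc (Suc d)"
    have sr: "set (replicate (n - 1) (x j)) \<subseteq> X" using xX by (cases "n - 1 = 0") auto
    have t: "E j ?k \<le> E j (j+1) + E (j+1) ?k - a (j+1)"
      using pm_tri[OF pm, of "replicate (n - 1) (x j) @ [x ?k]" "x (j+1)"] n1 xX sr
      unfolding E_def a_def by (auto simp: butlast_append)
    have "E (j+1) ?k \<le> r + c^(j+1)*K/(1-c)" using Suc[of "j+1"] by simp
    moreover have "c^j*K + c^(j+1)*K/(1-c) = c^j*K/(1-c)" using c1 by (simp add: field_simps)
    ultimately show ?case using t Eb[of j] ar[of j] by linarith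
  qed
  have DA: "E j k - a j \<le> c^j*K/(1-c)" if "1 \<le> j" "j < k" for j k
  proof -
    obtain d where d: "k = j + Suc d" using \<open>j<k\<close> less_iff_Suc_add by (metis add_Suc_right add.commute)
    have "r \<le> a j" using ar[of "j-1"] that by simp
    then show ?thesis using A[of j d] d by simp
  qed
  have DB: "E j k - a j \<le> c^k*K + n*(c^k*K/(1-c))" if "1 \<le> k" "k < j" for j k
  proof -
    have "E j k \<le> a k + n*(c^k*K/(1-c))"
      unfolding E_def a_def
    proof (rule pm_upper[OF pm])
      show "length (replicate (n - 1) (x j) @ [x k]) = n" using n1 by simp
      show "set (replicate (n - 1) (x j) @ [x k]) \<subseteq> X" using xX by auto
      show "x k \<in> X" by (rule xX)
      fix t assume "t \<in> set (replicate (n - 1) (x j) @ [x k])"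
      then have "t = x j \<or> t = x k" by (auto split: if_splits)
      moreover have "0 \<le> c^k*K/(1-c)" using K0 c1 assms(5) by simp
      ultimately show "P (replicate (n - 1) (x k) @ [t]) - P (replicate n (x k)) \<le> c^k*K/(1-c)"
        using DA[of k j] that EE[of k] unfolding E_def a_def by auto
    qed
    moreover have "a k \<le> r + c^k*K" using aE[of k "k+1"] Eb[of k] by simp
    moreover have "r \<le> a j" using ar[of "j-1"] that by simp
    ultimately show ?thesis by simp
  qed
  define L where "L = K * (1 + n/(1-c))"
  have L0: "L \<ge> 0" unfolding L_def using K0 c1 by simp
  have DU: "E j k - a j \<le> c^N * L" if "1 \<le> N" "N \<le> j" "N \<le> k" for N j k
  proof -
    have pj: "c^j \<le> c^N" and pk: "c^k \<le> c^N"
      using that assms(5,6) by (simp_all add: power_decreasing)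
    have q0: "0 \<le> K/(1-c)" using K0 c1 by simp
    have q1: "K/(1-c) \<le> n * (K/(1-c))" using mult_right_mono[of 1 "real n" "K/(1-c)"] n1 q0 by simp
    have Ld: "L = K + n * (K/(1-c))" unfolding L_def by (simp add: algebra_simps)
    have Kn: "K \<le> L" "K/(1-c) \<le> L" using Ld q0 q1 K0 by simp_all
    consider "j < k" | "j = k" | "k < j" by linarith
    then show ?thesis
    proof cases
      case 1
      have "c^j*K/(1-c) \<le> c^N * L"
        using mult_mono[OF pj Kn(2)] K0 c1 assms(5) by (simp add: divide_nonneg_pos)
      then show ?thesis using DA[of j k] 1 that by simp
    next
      case 2 then show ?thesis using EE[of j] L0 assms(5) by simp
    next
      case 3
      have "c^k*K + n*(c^k*K/(1-c)) = c^k * L" unfolding L_def by (simp add: field_simps)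
      also have "\<dots> \<le> c^N * L" using pk L0 by (simp add: mult_right_mono)
      finally show ?thesis using DB[of k j] 3 that by simp
    qed
  qed
  define M where "M = K + n * L"
  have M0: "M \<ge> 0" unfolding M_def using K0 L0 by simp
  show ?thesis unfolding pn_cauchy_def
  proof (intro exI[of _ r] allI impI)
    fix \<epsilon> :: real assume e: "\<epsilon> > 0"
    obtain N' where N': "c^N' < \<epsilon>/(M+1)" using real_arch_pow_inv[of "\<epsilon>/(M+1)" c] e M0 assms(6) by auto
    define N where "N = Suc N'"
    have N1: "1 \<le> N" unfolding N_def by simp
    have cN: "c^N \<le> c^N'" unfolding N_def using assms(5,6) by (simp add: power_decreasing)
    have "c^N' * M \<le> c^N' * (M+1)" using assms(5) by simp
    also have "\<dots> < \<epsilon>" using N' M0 by (simp add: field_simps)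
    finally have cM: "c^N * M < \<epsilon>" using cN M0 mult_right_mono[OF cN M0] by linarith
    show "\<exists>N. \<forall>is. length is = n \<and> (\<forall>i\<in>set is. i > N) \<longrightarrow> \<bar>P (map (\<lambda>i. (f ^^ i) xo) is) - r\<bar> < \<epsilon>"
    proof (intro exI allI impI)
      fix "is" :: "nat list" assume h: "length is = n \<and> (\<forall>i\<in>set is. i > N)"
      have ab: "\<bar>P (map x is) - P (replicate n (x N))\<bar> \<le> real n * (c^N * L)"
      proof (rule pm_abs[OF pm])
        show "length (map x is) = n" using h by simp
        show "set (map x is) \<subseteq> X" using xX by auto
        show "x N \<in> X" by (rule xX)
        fix t assume "t \<in> set (map x is)"
        then obtain i where i: "i \<in> set is" "t = x i" by auto
        have iN: "N \<le> i" using h i by auto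
        show "P (replicate (n - 1) (x N) @ [t]) - P (replicate n (x N)) \<le> c^N * L"
          using DU[OF N1 order_refl iN] i unfolding E_def a_def by simp
        show "P (replicate (n - 1) t @ [x N]) - P (replicate n t) \<le> c^N * L"
          using DU[OF N1 iN order_refl] i unfolding E_def a_def by simp
      qed
      have aN: "r \<le> a N" "a N \<le> r + c^N * K"
        using ar[of N'] aE[of N "N+1"] Eb[of N] unfolding N_def by simp_all
      have "\<bar>P (map x is) - r\<bar> \<le> c^N * M"
        using ab aN unfolding M_def a_def by (simp add: abs_le_iff algebra_simps)
      then show "\<bar>P (map (\<lambda>i. (f ^^ i) xo) is) - r\<bar> < \<epsilon>" using cM unfolding x_def by simp
    qed
  qed
qed

end
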